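(* Let $p$ be an odd prime and $k\in\{1,2,\ldots,\frac{p-1}2\}$. Then $$\frac{(-1)^k\binom{(p-1)/2+k}{k}}{\binom{(p-1)/2}{k}}\equiv1+2p\sum_{i=1}^k\frac1{2i-1}\equiv3-2(-4)^k\frac{\binom{(p-1)/2}{k}}{\binom{2k}k}\pmod{p^2}.$$
   Context: Congruences are between rational numbers whose denominators are prime to $p$. *)

theory Defs
  imports "HOL-Computational_Algebra.Computational_Algebra" "HOL-Number_Theory.Number_Theory"
begin

definition p_integral :: "nat \<Rightarrow> rat \<Rightarrow> bool" where
  "p_integral p x \<longleftrightarrow> coprime (snd (quotient_of x)) (int p)"

definition rat_cong_pow :: "rat \<Rightarrow> rat \<Rightarrow> nat \<Rightarrow> nat \<Rightarrow> bool" where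
  "rat_cong_pow a b p n \<longleftrightarrow>
     p_integral p a \<and> p_integral p b \<and> p_integral p ((a - b) / of_nat (p ^ n))"

end

theory Submission
  imports Defs
begin


lemma pint_iff:
  "p_integral p x \<longleftrightarrow> (\<exists>a b. b \<noteq> 0 \<and> coprime b (int p) \<and> x = of_int a / of_int b)"
proof
  assume "p_integral p x"
  obtain a b where ab: "quotient_of x = (a, b)" by (cases "quotient_of x")
  then have "x = of_int a / of_int b" "b > 0" using quotient_of_div quotient_of_denom_pos by auto
  with \<open>p_integral p x\<close> ab show "\<exists>a b. b \<noteq> 0 \<and> coprime b (int p) \<and> x = of_int a / of_int b"
    unfolding p_integral_def by (intro exI[of _ a] exI[of _ b]) auto
next
  assume "\<exists>a b. b \<noteq> 0 \<and> coprime b (int p) \<and> x = of_int a / of_int b"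
  then obtain a b where h: "b \<noteq> 0" "coprime b (int p)" "x = of_int a / of_int b" by blast
  obtain a' b' where ab: "quotient_of x = (a', b')" by (cases "quotient_of x")
  then have x': "x = of_int a' / of_int b'" "b' > 0" "coprime a' b'"
    using quotient_of_div quotient_of_denom_pos quotient_of_coprime by auto
  have "of_int a / of_int b = (of_int a' / of_int b' :: rat)" using h x' by simp
  then have "rat_of_int (a * b') = rat_of_int (a' * b)" using h x' by (simp add: field_simps)
  then have e: "a * b' = a' * b" by linarith
  then have "b' dvd a' * b" by (metis dvd_triv_right)
  then have "b' dvd b" using x'(3) by (metis coprime_commute coprime_dvd_mult_left_iff coprime_dvd_mult_right_iff)
  then have "coprime b' (int p)" using h(2) coprime_imp_coprime dvd_trans by blast
  then show "p_integral p x" unfolding p_integral_def ab by simp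
qed

lemma pint_mult: "p_integral p x \<Longrightarrow> p_integral p y \<Longrightarrow> p_integral p (x * y)"
  unfolding pint_iff
proof (elim exE conjE)
  fix a b c d assume *: "b \<noteq> 0" "coprime b (int p)" "x = of_int a / of_int b"
    "d \<noteq> 0" "coprime d (int p)" "y = of_int c / of_int d"
  show "\<exists>a b. b \<noteq> 0 \<and> coprime b (int p) \<and> x * y = of_int a / of_int b"
    by (rule exI[of _ "a*c"], rule exI[of _ "b*d"]) (use * in auto)
qed

lemma pint_add: "p_integral p x \<Longrightarrow> p_integral p y \<Longrightarrow> p_integral p (x + y)"
  unfolding pint_iff
proof (elim exE conjE)
  fix a b c d assume *: "b \<noteq> 0" "coprime b (int p)" "x = of_int a / of_int b"
    "d \<noteq> 0" "coprime d (int p)" "y = of_int c / of_int d"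
  show "\<exists>a b. b \<noteq> 0 \<and> coprime b (int p) \<and> x + y = of_int a / of_int b"
    by (rule exI[of _ "a*d + c*b"], rule exI[of _ "b*d"]) (use * in \<open>auto simp: field_simps\<close>)
qed

lemma pint_int: "p_integral p (of_int a)"
  unfolding pint_iff by (rule exI[of _ a], rule exI[of _ 1]) auto

lemma pint_nat: "p_integral p (of_nat a)"
  using pint_int[of p "int a"] by simp

lemma pint_uminus: "p_integral p x \<Longrightarrow> p_integral p (- x)"
  using pint_mult[of p "-1" x] pint_int[of p "-1"] by simp

lemma pint_diff: "p_integral p x \<Longrightarrow> p_integral p y \<Longrightarrow> p_integral p (x - y)"
  using pint_add[of p x "-y"] pint_uminus by simp

lemma pint_inv: "coprime b (int p) \<Longrightarrow> p_integral p (1 / of_int b)"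
proof (cases "b = 0")
  case True then show ?thesis using pint_int[of p 0] by simp
next
  case False assume "coprime b (int p)"
  with False show ?thesis unfolding pint_iff by (intro exI[of _ 1] exI[of _ b]) auto
qed

lemma pint_sum: "(\<And>j. j \<in> A \<Longrightarrow> p_integral p (f j)) \<Longrightarrow> p_integral p (\<Sum>j\<in>A. f j)"
  by (induction A rule: infinite_finite_induct) (auto intro: pint_add pint_int[of p 0, simplified])

lemma pint_prod: "(\<And>j. j \<in> A \<Longrightarrow> p_integral p (f j)) \<Longrightarrow> p_integral p (\<Prod>j\<in>A. f j)"
  by (induction A rule: infinite_finite_induct) (auto intro: pint_mult pint_int[of p 1, simplified])

lemma prod_expand:
  fixes v :: "nat \<Rightarrow> rat"
  assumes "\<And>j. j \<in> {1..k} \<Longrightarrow> p_integral p (v j)"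
  shows "\<exists>r. p_integral p r \<and> (\<Prod>j=1..k. 1 + of_nat p * v j) = 1 + of_nat p * (\<Sum>j=1..k. v j) + of_nat p ^ 2 * r"
  using assms
proof (induction k)
  case 0
  then show ?case by (auto intro!: exI[of _ 0] pint_int[of p 0, simplified])
next
  case (Suc k)
  have "\<exists>r. p_integral p r \<and> (\<Prod>j=1..k. 1 + of_nat p * v j) = 1 + of_nat p * (\<Sum>j=1..k. v j) + of_nat p ^ 2 * r"
    by (rule Suc.IH) (use Suc.prems in auto)
  then obtain r where r: "p_integral p r" "(\<Prod>j=1..k. 1 + of_nat p * v j) = 1 + of_nat p * (\<Sum>j=1..k. v j) + of_nat p ^ 2 * r" by blast
  let ?r = "(\<Sum>j=1..k. v j) * v (Suc k) + r * (1 + of_nat p * v (Suc k))"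
  have "p_integral p ?r"
    by (intro pint_add pint_mult pint_sum Suc.prems r pint_nat pint_int[of p 1, simplified]) auto
  moreover have "(\<Prod>j=1..Suc k. 1 + of_nat p * v j) = 1 + of_nat p * (\<Sum>j=1..Suc k. v j) + of_nat p ^ 2 * ?r"
  proof -
    have "(\<Prod>j=1..Suc k. 1 + of_nat p * v j) = (\<Prod>j=1..k. 1 + of_nat p * v j) * (1 + of_nat p * v (Suc k))"
      by (simp add: prod.nat_ivl_Suc' mult.commute)
    moreover have "(\<Sum>j=1..Suc k. v j) = (\<Sum>j=1..k. v j) + v (Suc k)"
      by simp
    ultimately show ?thesis unfolding r(2) by (simp add: algebra_simps power2_eq_square)
  qed
  ultimately show ?case by blast
qed



lemma prod_Suc1: "(\<Prod>j=1..Suc k. f j) = (\<Prod>j=1..k. f j) * (f (Suc k) :: 'a::comm_monoid_mult)"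
  by (simp add: prod.nat_ivl_Suc' mult.commute)

lemma binom_B1: "rat_of_nat (n + k choose k) = (\<Prod>j=1..k. (of_nat n + of_nat j) / of_nat j)"
proof (induction k)
  case 0 then show ?case by simp
next
  case (Suc k)
  have e: "Suc k * (Suc (n + k) choose Suc k) = Suc (n+k) * (n + k choose k)"
    by (rule Suc_times_binomial)
  have "rat_of_nat (n + Suc k choose Suc k) = of_nat (n + k choose k) * (of_nat n + of_nat (Suc k)) / of_nat (Suc k)"
  proof -
    have "rat_of_nat (Suc k) * of_nat (Suc (n + k) choose Suc k) = of_nat (Suc (n+k)) * of_nat (n + k choose k)"
      using arg_cong[OF e, of rat_of_nat] by (simp only: of_nat_mult)
    then show ?thesis by (simp add: field_simps)
  qed
  also have "\<dots> = (\<Prod>j=1..Suc k. (of_nat n + of_nat j) / of_nat j)"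
    unfolding prod_Suc1 Suc.IH[symmetric] by simp
  finally show ?case .
qed

lemma binom_B2: "k \<le> n \<Longrightarrow> rat_of_nat (n choose k) = (\<Prod>j=1..k. (of_nat n + 1 - of_nat j) / of_nat j)"
proof (induction k)
  case 0 then show ?case by simp
next
  case (Suc k)
  have e: "Suc k * (n choose Suc k) = (n - k) * (n choose k)"
    using binomial_absorption[of k n] binomial_absorb_comp[of n k] by simp
  have "rat_of_nat (n choose Suc k) = of_nat (n choose k) * (of_nat n + 1 - of_nat (Suc k)) / of_nat (Suc k)"
  proof -
    have "rat_of_nat (Suc k) * of_nat (n choose Suc k) = of_nat (n - k) * of_nat (n choose k)"
      using arg_cong[OF e, of rat_of_nat] by (simp only: of_nat_mult)
    then show ?thesis using Suc.prems by (simp add: field_simps of_nat_diff)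
  qed
  also have "\<dots> = (\<Prod>j=1..Suc k. (of_nat n + 1 - of_nat j) / of_nat j)"
    unfolding prod_Suc1 Suc.IH[OF Suc_leD[OF Suc.prems], symmetric] by simp
  finally show ?case .
qed

lemma binom_C: "rat_of_nat (2 * k choose k) = (\<Prod>j=1..k. (4 * of_nat j - 2) / of_nat j)"
proof (induction k)
  case 0 then show ?case by simp
next
  case (Suc k)
  have e1: "Suc k * (Suc (2*k+1) choose Suc k) = Suc (2*k+1) * (2*k+1 choose k)"
    by (rule Suc_times_binomial)
  have e2: "Suc k * (2*k+1 choose Suc k) = (2*k+1) * (2*k choose k)"
    using binomial_absorption[of k "2*k+1"] by simp
  have e3: "Suc k * (Suc (k + k) choose Suc k) = Suc k * (Suc (k + k) choose k)"
    by (rule Suc_times_binomial_add)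
  have e3'': "(Suc (k + k) choose Suc k) = (Suc (k + k) choose k)" using e3 by (metis Suc_neq_Zero mult_left_cancel)
  have t: "2*k+1 = Suc (k+k)" by simp
  have e3': "(2*k+1 choose Suc k) = (2*k+1 choose k)" unfolding t by (rule e3'')
  have "rat_of_nat (Suc k) * of_nat (Suc k) * of_nat (2 * Suc k choose Suc k) = of_nat (Suc (2*k+1)) * of_nat (2*k+1) * of_nat (2 * k choose k)"
  proof -
    have "Suc k * Suc k * (2 * Suc k choose Suc k) = Suc (2*k+1) * (Suc k * (2*k+1 choose k))"
    proof -
      have t2: "2 * Suc k = Suc (2*k+1)" by simp
      have "Suc k * Suc k * (2 * Suc k choose Suc k) = Suc k * (Suc k * (Suc (2*k+1) choose Suc k))"
        unfolding t2 by (simp only: mult.assoc)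
      also have "\<dots> = Suc k * (Suc (2*k+1) * (2*k+1 choose k))" by (simp only: e1)
      also have "\<dots> = Suc (2*k+1) * (Suc k * (2*k+1 choose k))" by (simp only: mult.left_commute)
      finally show ?thesis .
    qed
    also have "\<dots> = Suc (2*k+1) * (2*k+1) * (2*k choose k)" by (simp only: e3'[symmetric] e2 mult.assoc)
    finally show ?thesis by (metis of_nat_mult)
  qed
  then have "rat_of_nat (2 * Suc k choose Suc k) = of_nat (2*k choose k) * (4 * of_nat (Suc k) - 2) / of_nat (Suc k)"
  proof -
    fix X Y :: rat
    have gen: "\<And>X Y. rat_of_nat (Suc k) * of_nat (Suc k) * X = of_nat (Suc (2*k+1)) * of_nat (2*k+1) * Y \<Longrightarrow>
       X = Y * (4 * of_nat (Suc k) - 2) / of_nat (Suc k)"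
    proof -
      fix X Y :: rat
      assume h: "rat_of_nat (Suc k) * of_nat (Suc k) * X = of_nat (Suc (2*k+1)) * of_nat (2*k+1) * Y"
      define c where "c = rat_of_nat (Suc k)"
      have c0: "c \<noteq> 0" unfolding c_def by simp
      have "c * (X * c - Y * (4 * c - 2)) = 0" using h unfolding c_def by (simp add: algebra_simps)
      then have "X * c = Y * (4 * c - 2)" using c0 by simp
      then show "X = Y * (4 * of_nat (Suc k) - 2) / of_nat (Suc k)" using c0 unfolding c_def[symmetric] by (simp add: field_simps)
    qed
    assume "rat_of_nat (Suc k) * of_nat (Suc k) * of_nat (2 * Suc k choose Suc k) = of_nat (Suc (2*k+1)) * of_nat (2*k+1) * of_nat (2 * k choose k)"
    then show ?thesis by (rule gen)
  qed
  also have "\<dots> = (\<Prod>j=1..Suc k. (4 * of_nat j - 2) / of_nat j)"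
    unfolding prod_Suc1 Suc.IH[symmetric] by simp
  finally show ?case .
qed



lemma coprime_small:
  assumes "prime p" "m \<noteq> 0" "\<bar>m\<bar> < int p"
  shows "coprime m (int p)"
proof -
  have pp: "prime (int p)" using assms(1) by simp
  have "\<not> int p dvd m"
  proof
    assume "int p dvd m"
    then have "\<bar>int p\<bar> \<le> \<bar>m\<bar>" using dvd_imp_le_int assms(2) by blast
    then show False using assms(3) by simp
  qed
  then show ?thesis using prime_imp_coprime[OF pp] by (simp add: coprime_commute)
qed

lemma aux_v1:
  fixes a q :: rat
  assumes "a \<noteq> 0" "a - q \<noteq> 0"
  shows "2 / (a - q) = 2 * (1 / a) + q * (2 / ((a - q) * a))"
  using assms by (simp add: field_simps)

lemma aux_A:
  fixes x y :: rat
  assumes "y \<noteq> 0" "x + 1 - y \<noteq> 0"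
  shows "(-1) * ((x + y) / y) / ((x + 1 - y) / y) = 1 + (2 * x + 1) * (2 / (2 * y - 1 - (2 * x + 1)))"
proof -
  have e: "2 * y - 1 - (2 * x + 1) = -2 * (x + 1 - y)" by (simp add: algebra_simps)
  have l: "(-1) * ((x + y) / y) / ((x + 1 - y) / y) = - (x + y) / (x + 1 - y)"
    using assms(1) by simp
  have r: "1 + (2 * x + 1) * (2 / (-2 * (x + 1 - y))) = (x + 1 - y - (2 * x + 1)) / (x + 1 - y)"
    using assms(2) by (simp add: field_simps)
  show ?thesis unfolding e l r by (simp add: algebra_simps)
qed

lemma aux_B:
  fixes x y :: rat
  assumes "y \<noteq> 0" "2 * y - 1 \<noteq> 0"
  shows "(-4) * ((x + 1 - y) / y) / ((4 * y - 2) / y) = 1 + (2 * x + 1) * (- (1 / (2 * y - 1)))"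
proof -
  have e: "4 * y - 2 = 2 * (2 * y - 1)" by (simp add: algebra_simps)
  show ?thesis unfolding e using assms by (simp add: field_simps)
qed

lemma pint_two: "p_integral p 2"
  using pint_nat[of p 2] by simp

theorem lemma2p5:
  fixes p k :: nat
  assumes "prime p" and "odd p" and "1 \<le> k" and "k \<le> (p - 1) div 2"
  shows "rat_cong_pow
           ((-1) ^ k * of_nat ((p - 1) div 2 + k choose k) / of_nat ((p - 1) div 2 choose k))
           (1 + 2 * of_nat p * (\<Sum>i = 1..k. 1 / (2 * of_nat i - 1))) p 2
       \<and> rat_cong_pow
           (1 + 2 * of_nat p * (\<Sum>i = 1..k. 1 / (2 * of_nat i - 1)))
           (3 - 2 * (-4) ^ k * of_nat ((p - 1) div 2 choose k) / of_nat (2 * k choose k)) p 2"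
proof -
  define n where "n = (p - 1) div 2"
  have p2: "p \<ge> 2" using assms(1) prime_ge_2_nat by blast
  have pn: "p = 2 * n + 1" unfolding n_def using assms(2) p2 by presburger
  have kn: "k \<le> n" using assms(4) unfolding n_def .
  define q :: rat where "q = of_nat p"
  have qn: "q = 2 * of_nat n + 1" unfolding q_def pn by simp
  have q0: "q \<noteq> 0" unfolding qn by (simp add: add_nonneg_eq_0_iff)
  define S :: rat where "S = (\<Sum>i = 1..k. 1 / (2 * of_nat i - 1))"
  define v1 :: "nat \<Rightarrow> rat" where "v1 j = 2 / (2 * of_nat j - 1 - q)" for j
  define v2 :: "nat \<Rightarrow> rat" where "v2 j = - (1 / (2 * of_nat j - 1))" for j
  define w :: "nat \<Rightarrow> rat" where "w j = 2 / ((2 * of_nat j - 1 - q) * (2 * of_nat j - 1))" for j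
  have e1: "(2 * of_nat j - 1 :: rat) = of_int (2 * int j - 1)" for j by simp
  have e2: "(2 * of_nat j - 1 - q :: rat) = of_int (2 * int j - 1 - int p)" for j unfolding q_def by simp
  have cop1: "coprime (2 * int j - 1) (int p)" if "j \<in> {1..k}" for j
    using that kn pn by (intro coprime_small assms(1)) auto
  have cop2: "coprime (2 * int j - 1 - int p) (int p)" if "j \<in> {1..k}" for j
    using that kn pn by (intro coprime_small assms(1)) auto
  have i1: "p_integral p (1 / (2 * of_nat j - 1))" if "j \<in> {1..k}" for j
    unfolding e1 by (rule pint_inv[OF cop1[OF that]])
  have i2: "p_integral p (1 / (2 * of_nat j - 1 - q))" if "j \<in> {1..k}" for j
    unfolding e2 by (rule pint_inv[OF cop2[OF that]])
  have pv1: "p_integral p (v1 j)" if "j \<in> {1..k}" for j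
    using pint_mult[OF pint_nat[of p 2] i2[OF that]] unfolding v1_def by simp
  have pv2: "p_integral p (v2 j)" if "j \<in> {1..k}" for j
    using pint_uminus[OF i1[OF that]] unfolding v2_def by simp
  have pw: "p_integral p (w j)" if "j \<in> {1..k}" for j
    using pint_mult[OF pint_mult[OF pint_nat[of p 2] i2[OF that]] i1[OF that]] unfolding w_def by simp
  have pS: "p_integral p S" unfolding S_def by (rule pint_sum) (rule i1)
  have pW: "p_integral p (\<Sum>j=1..k. w j)" by (rule pint_sum) (rule pw)
  have nz1: "(2 * of_nat j - 1 :: rat) \<noteq> 0" if "j \<in> {1..k}" for j
    unfolding e1 of_int_eq_0_iff using that by auto
  have nz2: "(2 * of_nat j - 1 - q :: rat) \<noteq> 0" if "j \<in> {1..k}" for j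
    using that kn pn unfolding e2 of_int_eq_0_iff by auto
  obtain r1 where r1: "p_integral p r1" "(\<Prod>j=1..k. 1 + q * v1 j) = 1 + q * (\<Sum>j=1..k. v1 j) + q ^ 2 * r1"
    using prod_expand[of k p v1] pv1 unfolding q_def by blast
  obtain r2 where r2: "p_integral p r2" "(\<Prod>j=1..k. 1 + q * v2 j) = 1 + q * (\<Sum>j=1..k. v2 j) + q ^ 2 * r2"
    using prod_expand[of k p v2] pv2 unfolding q_def by blast
  have sv1: "(\<Sum>j=1..k. v1 j) = 2 * S + q * (\<Sum>j=1..k. w j)"
  proof -
    have "(\<Sum>j=1..k. v1 j) = (\<Sum>j=1..k. 2 * (1 / (2 * of_nat j - 1)) + q * w j)"
    proof (rule sum.cong[OF refl])
      fix j assume j: "j \<in> {1..k}"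
      show "v1 j = 2 * (1 / (2 * of_nat j - 1)) + q * w j"
        using nz1[OF j] nz2[OF j] unfolding v1_def w_def by (rule aux_v1)
    qed
    then show ?thesis unfolding S_def by (simp add: sum.distrib sum_distrib_left)
  qed
  have sv2: "(\<Sum>j=1..k. v2 j) = - S" unfolding v2_def S_def by (simp add: sum_negf)
  have A: "(-1) ^ k * of_nat (n + k choose k) / of_nat (n choose k) = (\<Prod>j=1..k. 1 + q * v1 j)"
  proof -
    have "(-1) ^ k * of_nat (n + k choose k) / of_nat (n choose k)
      = (\<Prod>j=1..k. (-1::rat)) * (\<Prod>j=1..k. (of_nat n + of_nat j) / of_nat j) / (\<Prod>j=1..k. (of_nat n + 1 - of_nat j) / of_nat j)"
      by (simp add: binom_B1 binom_B2[OF kn])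
    also have "\<dots> = (\<Prod>j=1..k. (-1) * ((of_nat n + of_nat j) / of_nat j) / ((of_nat n + 1 - of_nat j) / of_nat j))"
      by (simp only: prod.distrib prod_dividef)
    also have "\<dots> = (\<Prod>j=1..k. 1 + q * v1 j)"
    proof (rule prod.cong[OF refl])
      fix j assume j: "j \<in> {1..k}"
      have a: "(of_nat n + 1 - of_nat j :: rat) \<noteq> 0" using j kn by simp
      have b: "(of_nat j :: rat) \<noteq> 0" using j by simp
      have c: "(2 * of_nat j - 1 - (2 * of_nat n + 1) :: rat) \<noteq> 0" using nz2[OF j] unfolding qn .
      show "(-1) * ((of_nat n + of_nat j) / of_nat j) / ((of_nat n + 1 - of_nat j) / of_nat j) = 1 + q * v1 j"
        unfolding v1_def qn using aux_A[OF b a] by (simp add: add.commute)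
    qed
    finally show ?thesis .
  qed
  have B: "(-4) ^ k * of_nat (n choose k) / of_nat (2 * k choose k) = (\<Prod>j=1..k. 1 + q * v2 j)"
  proof -
    have "(-4) ^ k * of_nat (n choose k) / of_nat (2 * k choose k)
      = (\<Prod>j=1..k. (-4::rat)) * (\<Prod>j=1..k. (of_nat n + 1 - of_nat j) / of_nat j) / (\<Prod>j=1..k. (4 * of_nat j - 2) / of_nat j)"
      by (simp add: binom_C binom_B2[OF kn])
    also have "\<dots> = (\<Prod>j=1..k. (-4) * ((of_nat n + 1 - of_nat j) / of_nat j) / ((4 * of_nat j - 2) / of_nat j))"
      by (simp only: prod.distrib prod_dividef)
    also have "\<dots> = (\<Prod>j=1..k. 1 + q * v2 j)"
    proof (rule prod.cong[OF refl])
      fix j assume j: "j \<in> {1..k}"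
      have a: "(2 * of_nat j - 1 :: rat) \<noteq> 0" using nz1[OF j] .
      have b: "(of_nat j :: rat) \<noteq> 0" using j by simp
      show "(-4) * ((of_nat n + 1 - of_nat j) / of_nat j) / ((4 * of_nat j - 2) / of_nat j) = 1 + q * v2 j"
        unfolding v2_def qn by (rule aux_B[OF b a])
    qed
    finally show ?thesis .
  qed
  have L1: "(-1) ^ k * of_nat ((p - 1) div 2 + k choose k) / of_nat ((p - 1) div 2 choose k) = 1 + 2 * q * S + q^2 * ((\<Sum>j=1..k. w j) + r1)"
    unfolding n_def[symmetric] A r1(2) sv1 by (simp add: algebra_simps power2_eq_square)
  have R2: "3 - 2 * (-4) ^ k * of_nat ((p - 1) div 2 choose k) / of_nat (2 * k choose k) = 1 + 2 * q * S - q^2 * (2 * r2)"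
  proof -
    have "3 - 2 * (-4) ^ k * of_nat ((p - 1) div 2 choose k) / of_nat (2 * k choose k)
       = 3 - 2 * ((-4) ^ k * of_nat (n choose k) / of_nat (2 * k choose k) :: rat)"
      unfolding n_def by simp
    also have "\<dots> = 1 + 2 * q * S - q^2 * (2 * r2)"
      unfolding B r2(2) sv2 by (simp add: algebra_simps)
    finally show ?thesis .
  qed
  have pq: "p_integral p q" unfolding q_def by (rule pint_nat)
  have pq2: "p_integral p (q^2)" unfolding power2_eq_square by (intro pint_mult pq)
  have p1: "p_integral p 1" using pint_int[of p 1] by simp
  have pR: "p_integral p (1 + 2 * q * S)"
    by (intro pint_add pint_mult pq pS p1 pint_two)
  have pL1: "p_integral p (1 + 2 * q * S + q^2 * ((\<Sum>j=1..k. w j) + r1))"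
    by (intro pint_add pint_mult pR pW r1(1) pq2)
  have pR2: "p_integral p (1 + 2 * q * S - q^2 * (2 * r2))"
    by (intro pint_diff pint_mult pR r2(1) pint_two pq2)
  have d1: "(1 + 2 * q * S + q^2 * ((\<Sum>j=1..k. w j) + r1) - (1 + 2 * q * S)) / of_nat (p^2) = (\<Sum>j=1..k. w j) + r1"
    using q0 unfolding q_def by simp
  have d2: "(1 + 2 * q * S - (1 + 2 * q * S - q^2 * (2 * r2))) / of_nat (p^2) = 2 * r2"
    using q0 unfolding q_def by simp
  have T: "(1 + 2 * of_nat p * (\<Sum>i = 1..k. 1 / (2 * of_nat i - 1))) = 1 + 2 * q * S"
    unfolding q_def S_def ..
  show ?thesis
    unfolding rat_cong_pow_def L1 R2 T d1 d2
    using pL1 pR pR2 pW r1(1) r2(1)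
    by (auto intro: pint_add pint_mult pint_two)
qed


end
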